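(* Let $\eta$ be a probability measure on $\Theta$ equivalent to $\mu$, $\alpha\in(0,1]$, and let $(R^*_\theta,p^*_\theta)_{\theta\in\Theta}$ be an incentive efficient menu optimal for problem (W). Suppose the premia satisfy, for every $\theta$, $$p^*_\theta=\int_0^{\bar L}\big[1-g_{\underline\theta}(F_{\underline\theta}(l))\big]dl-\int_{\underline\theta}^{\theta}\int_0^{\bar L}\Big[\frac{\partial g_s}{\partial s}(F_s(l))+g_s'(F_s(l))\frac{\partial F_s(l)}{\partial s}\Big]\frac{\partial R^*_s(l)}{\partial l}dl\,ds-\int_0^{\bar L}\big[1-g_\theta(F_\theta(l))\big]\frac{\partial R^*_\theta(l)}{\partial l}dl.$$ Then: (1) if $\frac{\partial R^*_\theta(l)}{\partial l}\equiv0$, then $\int_\Theta\int_0^{\bar L}g^{In}(F_\theta(l))\,dl\,d\mu\ge\int_0^{\bar L}g_{\underline\theta}(F_{\underline\theta}(l))\,dl$; (2) if $\frac{\partial R^*_\theta(l)}{\partial l}\equiv1$, then $V_\theta(R^*_\theta,p^*_\theta)=0$ for all $\theta\in\Theta$; (3) if $\frac{\partial R^*_\theta(l)}{\partial l}$ takes values in $(0,1)$, then $$\int_\Theta\int_0^{\bar L}g^{In}(F_\theta(l))\,dl\,d\mu\ge\int_0^{\bar L}g_{\underline\theta}(F_{\underline\theta}(l))dl+\int_\Theta U_\theta(R^*_\theta,p^*_\theta)d\mu-U_{\underline\theta}(R^*_{\underline\theta},p^*_{\underline\theta})+\int_\Theta\int_0^{\bar L}\big[g^{In}(F_\theta(l))-g_\theta(F_\theta(l))\big]\frac{\partial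 R^*_\theta(l)}{\partial l}dl\,d\mu.$$ Moreover, if $p^*_\theta=0$ and $R^*_\theta=0$ for each $\theta\in\Theta$, then $g^{In}(F_\theta(l))=1$ for almost every $\theta\in\Theta$ and almost every $l\in[0,\bar L]$.
   Context: Setting (Yaari dual-utility insurance model). $(S,\Sigma,\mathbb P)$ is a probability space. Types: $\Theta=[\underline\theta,\bar\theta]$ with Borel $\sigma$-algebra and a probability measure $\mu$ with a Lebesgue density $q$. Fix $\bar L<\infty$. For each $\theta$ the type-$\theta$ agent faces a loss $L_\theta$ (bounded, $\Sigma$-measurable, values in $[0,\bar L]$) with continuous distribution function $F_\theta(l)=\mathbb P(L_\theta\le l)$. Retention functions: $\mathcal R=\{R:[0,\bar L]\to[0,\bar L]: R(0)=0,\ 0\le\partial R(l)/\partial l\le1\}$. A menu is a family $(R_\theta,p_\theta)_{\theta\in\Theta}$ with $R_\theta\in\mathcal R$, $p_\theta\in\mathbb R$. A distortion function is a nondecreasing $g:[0,1]\to[0,1]$ with $g(0)=0,g(1)=1$; type $\theta$ has distortion $g_\theta$ (with $g'_\theta$ the derivative in $t$), the insurer $g^{In}$. Utilities: $U_\theta(R,p)=-p-\int_0^{\bar L}[1-g_\theta(F_\theta(l))]\frac{\partial R(l)}{\partial l}dl$, $V_\theta(R,p)=p-\int_0^{\bar L}[1-g^{In}(F_\theta(l))](1-\frac{\partial R(l)}{\partial l})dl$, no-insurance utility $U_\theta(L_\theta,0)=-\int_0^{\bar L}[1-g_\theta(F_\theta(l))]dl$. Throughout, for every menu $\theta\mapsto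 U_\theta(R_\theta,p_\theta)$, $\theta\mapsto V_\theta(R_\theta,p_\theta)$ lie in $L^1(\Theta,\mu)$. Individually rational (IR): $U_\theta(R_\theta,p_\theta)\ge U_\theta(L_\theta,0)$ for all $\theta$ and $\int_\Theta V_\theta(R_\theta,p_\theta)d\mu\ge0$. Incentive compatible (IC): $U_\theta(R_\theta,p_\theta)\ge U_\theta(R_{\theta'},p_{\theta'})$ for all $\theta,\theta'$. Incentive efficient: an IR and IC menu $(R^*,p^* )$ such that no IR and IC menu $(R,p)$ has $U_\theta(R_\theta,p_\theta)\ge U_\theta(R^*_\theta,p^*_\theta)$ $\mu$-a.e. and $\int V_\theta(R_\theta,p_\theta)d\mu\ge\int V_\theta(R^*_\theta,p^*_\theta)d\mu$ with strict inequality in the latter or strict inequality in the former on a set of positive $\mu$-measure. Problem (W): $\sup\{\alpha\int_\Theta U_\theta(R_\theta,p_\theta)d\eta+(1-\alpha)\int_\Theta V_\theta(R_\theta,p_\theta)d\mu\}$ over IR and IC menus. Standing assumptions: (A1) $g^{In}(t)\ge g_\theta(t)$ for all $t,\theta$. (A2) $\theta\mapsto F_\theta(l)$ differentiable, $\{F_\theta\}$ uniformly Lipschitz in $\theta$, $\partial F_\theta(l)/\partial\theta\le0$ for all $l$. (A3) each $g_\theta$ differentiable with $g'_\theta\le\delta$ for a common $\delta<\infty$; $\theta\mapsto g_\theta(t)$ differentiable, uniformly Lipschitz in $\theta$; $\partial g_\theta(t)/\partial\theta\le0$ for $t\in(0,1)$. The conditions "$\frac{\partial R^*_\theta(l)}{\partial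 l}\equiv0$" etc. refer to all $\theta\in\Theta$ and $l\in[0,\bar L]$. *)

theory Defs
  imports "HOL-Probability.Probability"
begin

definition dwithin :: "(real \<Rightarrow> real) \<Rightarrow> real \<Rightarrow> real \<Rightarrow> real \<Rightarrow> real" where
  "dwithin f a b x = vector_derivative f (at x within {a..b})"

definition distortion :: "(real \<Rightarrow> real) \<Rightarrow> bool" where
  "distortion g \<longleftrightarrow> mono_on {0..1} g \<and> (\<forall>t\<in>{0..1}. g t \<in> {0..1}) \<and> g 0 = 0 \<and> g 1 = 1"

definition retention :: "real \<Rightarrow> (real \<Rightarrow> real) \<Rightarrow> bool" where
  "retention Lb R \<longleftrightarrow> R 0 = 0 \<and> (\<forall>l\<in>{0..Lb}. R l \<in> {0..Lb}) \<and>
     (\<forall>l\<in>{0..Lb}. R differentiable (at l within {0..Lb}) \<and>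
        0 \<le> dwithin R 0 Lb l \<and> dwithin R 0 Lb l \<le> 1)"

definition Ut :: "real \<Rightarrow> (real \<Rightarrow> real) \<Rightarrow> (real \<Rightarrow> real) \<Rightarrow> (real \<Rightarrow> real) \<Rightarrow> real \<Rightarrow> real" where
  "Ut Lb g Fth R p = - p - (LINT l:{0..Lb}|lborel. (1 - g (Fth l)) * dwithin R 0 Lb l)"

definition Vt :: "real \<Rightarrow> (real \<Rightarrow> real) \<Rightarrow> (real \<Rightarrow> real) \<Rightarrow> (real \<Rightarrow> real) \<Rightarrow> real \<Rightarrow> real" where
  "Vt Lb gIn Fth R p = p - (LINT l:{0..Lb}|lborel. (1 - gIn (Fth l)) * (1 - dwithin R 0 Lb l))"

text \<open>No-insurance utility U_theta(L_theta,0).\<close>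
definition U0 :: "real \<Rightarrow> (real \<Rightarrow> real) \<Rightarrow> (real \<Rightarrow> real) \<Rightarrow> real" where
  "U0 Lb g Fth = - (LINT l:{0..Lb}|lborel. 1 - g (Fth l))"

definition menu :: "real measure \<Rightarrow> real \<Rightarrow> (real \<Rightarrow> real \<Rightarrow> real) \<Rightarrow> (real \<Rightarrow> real)
    \<Rightarrow> (real \<Rightarrow> real \<Rightarrow> real) \<Rightarrow> (real \<Rightarrow> real \<Rightarrow> real) \<Rightarrow> (real \<Rightarrow> real) \<Rightarrow> bool" where
  "menu mu Lb g gIn F R p \<longleftrightarrow> (\<forall>\<theta>\<in>space mu. retention Lb (R \<theta>)) \<and>
     integrable mu (\<lambda>\<theta>. Ut Lb (g \<theta>) (F \<theta>) (R \<theta>) (p \<theta>)) \<and>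
     integrable mu (\<lambda>\<theta>. Vt Lb gIn (F \<theta>) (R \<theta>) (p \<theta>))"

definition IR :: "real measure \<Rightarrow> real \<Rightarrow> (real \<Rightarrow> real \<Rightarrow> real) \<Rightarrow> (real \<Rightarrow> real)
    \<Rightarrow> (real \<Rightarrow> real \<Rightarrow> real) \<Rightarrow> (real \<Rightarrow> real \<Rightarrow> real) \<Rightarrow> (real \<Rightarrow> real) \<Rightarrow> bool" where
  "IR mu Lb g gIn F R p \<longleftrightarrow>
     (\<forall>\<theta>\<in>space mu. Ut Lb (g \<theta>) (F \<theta>) (R \<theta>) (p \<theta>) \<ge> U0 Lb (g \<theta>) (F \<theta>)) \<and>
     (\<integral>\<theta>. Vt Lb gIn (F \<theta>) (R \<theta>) (p \<theta>) \<partial>mu) \<ge> 0"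

definition IC :: "real measure \<Rightarrow> real \<Rightarrow> (real \<Rightarrow> real \<Rightarrow> real)
    \<Rightarrow> (real \<Rightarrow> real \<Rightarrow> real) \<Rightarrow> (real \<Rightarrow> real \<Rightarrow> real) \<Rightarrow> (real \<Rightarrow> real) \<Rightarrow> bool" where
  "IC mu Lb g F R p \<longleftrightarrow>
     (\<forall>\<theta>\<in>space mu. \<forall>\<theta>'\<in>space mu.
        Ut Lb (g \<theta>) (F \<theta>) (R \<theta>) (p \<theta>) \<ge> Ut Lb (g \<theta>) (F \<theta>) (R \<theta>') (p \<theta>'))"

definition feasible :: "real measure \<Rightarrow> real \<Rightarrow> (real \<Rightarrow> real \<Rightarrow> real) \<Rightarrow> (real \<Rightarrow> real)
    \<Rightarrow> (real \<Rightarrow> real \<Rightarrow> real) \<Rightarrow> (real \<Rightarrow> real \<Rightarrow> real) \<Rightarrow> (real \<Rightarrow> real) \<Rightarrow> bool" where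
  "feasible mu Lb g gIn F R p \<longleftrightarrow>
     menu mu Lb g gIn F R p \<and> IR mu Lb g gIn F R p \<and> IC mu Lb g F R p"

definition incentive_efficient :: "real measure \<Rightarrow> real \<Rightarrow> (real \<Rightarrow> real \<Rightarrow> real) \<Rightarrow> (real \<Rightarrow> real)
    \<Rightarrow> (real \<Rightarrow> real \<Rightarrow> real) \<Rightarrow> (real \<Rightarrow> real \<Rightarrow> real) \<Rightarrow> (real \<Rightarrow> real) \<Rightarrow> bool" where
  "incentive_efficient mu Lb g gIn F Rs ps \<longleftrightarrow>
     feasible mu Lb g gIn F Rs ps \<and>
     \<not> (\<exists>R p. feasible mu Lb g gIn F R p \<and>
          (AE \<theta> in mu. Ut Lb (g \<theta>) (F \<theta>) (R \<theta>) (p \<theta>) \<ge> Ut Lb (g \<theta>) (F \<theta>) (Rs \<theta>) (ps \<theta>)) \<and>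
          (\<integral>\<theta>. Vt Lb gIn (F \<theta>) (R \<theta>) (p \<theta>) \<partial>mu) \<ge> (\<integral>\<theta>. Vt Lb gIn (F \<theta>) (Rs \<theta>) (ps \<theta>) \<partial>mu) \<and>
          ((\<integral>\<theta>. Vt Lb gIn (F \<theta>) (R \<theta>) (p \<theta>) \<partial>mu) > (\<integral>\<theta>. Vt Lb gIn (F \<theta>) (Rs \<theta>) (ps \<theta>) \<partial>mu) \<or>
           emeasure mu {\<theta>\<in>space mu. Ut Lb (g \<theta>) (F \<theta>) (R \<theta>) (p \<theta>) > Ut Lb (g \<theta>) (F \<theta>) (Rs \<theta>) (ps \<theta>)} > 0))"

definition Wobj :: "real \<Rightarrow> real measure \<Rightarrow> real measure \<Rightarrow> real \<Rightarrow> (real \<Rightarrow> real \<Rightarrow> real) \<Rightarrow> (real \<Rightarrow> real)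
    \<Rightarrow> (real \<Rightarrow> real \<Rightarrow> real) \<Rightarrow> (real \<Rightarrow> real \<Rightarrow> real) \<Rightarrow> (real \<Rightarrow> real) \<Rightarrow> real" where
  "Wobj \<alpha> eta mu Lb g gIn F R p =
     \<alpha> * (\<integral>\<theta>. Ut Lb (g \<theta>) (F \<theta>) (R \<theta>) (p \<theta>) \<partial>eta) +
     (1 - \<alpha>) * (\<integral>\<theta>. Vt Lb gIn (F \<theta>) (R \<theta>) (p \<theta>) \<partial>mu)"

definition optimal_W :: "real \<Rightarrow> real measure \<Rightarrow> real measure \<Rightarrow> real \<Rightarrow> (real \<Rightarrow> real \<Rightarrow> real) \<Rightarrow> (real \<Rightarrow> real)
    \<Rightarrow> (real \<Rightarrow> real \<Rightarrow> real) \<Rightarrow> (real \<Rightarrow> real \<Rightarrow> real) \<Rightarrow> (real \<Rightarrow> real) \<Rightarrow> bool" where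
  "optimal_W \<alpha> eta mu Lb g gIn F Rs ps \<longleftrightarrow>
     feasible mu Lb g gIn F Rs ps \<and>
     (\<forall>R p. feasible mu Lb g gIn F R p \<longrightarrow>
        Wobj \<alpha> eta mu Lb g gIn F R p \<le> Wobj \<alpha> eta mu Lb g gIn F Rs ps)"

end

theory Submission
  imports Defs
begin


lemma deriv_meas:
  fixes R :: "real \<Rightarrow> real" and Lb :: real
  assumes dif: "\<And>l. l \<in> {0..Lb} \<Longrightarrow> R differentiable (at l within {0..Lb})"
  shows "(\<lambda>l. indicator {0..Lb} l * dwithin R 0 Lb l) \<in> borel_measurable borel"
proof -
  define Rc where "Rc x = R (max 0 (min Lb x))" for x
  have contR: "continuous_on {0..Lb} R"
    using dif differentiable_imp_continuous_within continuous_on_eq_continuous_within by blast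
  have contRc: "continuous_on UNIV Rc"
  proof (cases "0 \<le> Lb")
    case True
    have "continuous_on UNIV (\<lambda>x. max 0 (min Lb x)::real)"
      by (intro continuous_intros)
    moreover have "(\<lambda>x. max 0 (min Lb x)::real) ` UNIV \<subseteq> {0..Lb}" using True by auto
    ultimately show ?thesis unfolding Rc_def
      using continuous_on_compose2[OF contR] by blast
  next
    case False
    then have "Rc = (\<lambda>x. R 0)" unfolding Rc_def by (auto simp: fun_eq_iff)
    then show ?thesis by simp
  qed
  define u where "u n l = (if l \<in> {0..<Lb} then real (Suc n) * (Rc (l + 1 / real (Suc n)) - Rc l) else 0)" for n l
  define E where "E l = (if l \<in> {0..<Lb} then dwithin R 0 Lb l else 0)" for l
  have u_meas: "u n \<in> borel_measurable borel" for n
  proof -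
    have "Rc \<in> borel_measurable borel" using contRc borel_measurable_continuous_onI by blast
    then show ?thesis unfolding u_def by measurable
  qed
  have u_lim: "(\<lambda>n. u n l) \<longlonglongrightarrow> E l" for l
  proof (cases "l \<in> {0..<Lb}")
    case False
    then have "u n l = 0" for n unfolding u_def by auto
    moreover have "E l = 0" using False unfolding E_def by auto
    ultimately show ?thesis by simp
  next
    case True
    have "(R has_vector_derivative dwithin R 0 Lb l) (at l within {0..Lb})"
      using dif[of l] True vector_derivative_works unfolding dwithin_def by auto
    then have "(R has_field_derivative dwithin R 0 Lb l) (at l within {0..Lb})"
      using has_real_derivative_iff_has_vector_derivative by blast
    then have q: "((\<lambda>y. (R y - R l) / (y - l)) \<longlongrightarrow> dwithin R 0 Lb l) (at l within {0..Lb})"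
      using has_field_derivative_iff by blast
    have s0: "(\<lambda>n. l + 1 / real (Suc n)) \<longlonglongrightarrow> l"
      using tendsto_add[OF tendsto_const LIMSEQ_inverse_real_of_nat] by (simp add: inverse_eq_divide)
    have ev: "eventually (\<lambda>n. l + 1 / real (Suc n) \<le> Lb) sequentially"
    proof -
      have "eventually (\<lambda>n. l + 1 / real (Suc n) < Lb) sequentially"
        using order_tendstoD(2)[OF s0, of Lb] True by auto
      then show ?thesis by (auto elim: eventually_mono)
    qed
    have s1: "filterlim (\<lambda>n. l + 1 / real (Suc n)) (at l within {0..Lb}) sequentially"
      unfolding filterlim_at using s0 ev True
      by (auto elim!: eventually_mono)
    have "(\<lambda>n. (R (l + 1 / real (Suc n)) - R l) / ((l + 1 / real (Suc n)) - l)) \<longlonglongrightarrow> dwithin R 0 Lb l"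
      using filterlim_compose[OF q s1] by simp
    moreover have "eventually (\<lambda>n. (R (l + 1 / real (Suc n)) - R l) / ((l + 1 / real (Suc n)) - l) = u n l) sequentially"
      using ev
    proof (rule eventually_mono)
      fix n assume "l + 1 / real (Suc n) \<le> Lb"
      moreover have "0 < 1 / real (Suc n)" by simp
      ultimately show "(R (l + 1 / real (Suc n)) - R l) / ((l + 1 / real (Suc n)) - l) = u n l"
        using True unfolding u_def Rc_def by (simp add: divide_simps)
    qed
    ultimately show ?thesis unfolding E_def using True
      by (simp add: tendsto_cong)
  qed
  have E_meas: "E \<in> borel_measurable borel"
    using borel_measurable_LIMSEQ_real[OF u_lim u_meas] by blast
  have eq: "(\<lambda>l. indicator {0..Lb} l * dwithin R 0 Lb l) =
     (\<lambda>l. E l + (if l = Lb \<and> 0 \<le> Lb then dwithin R 0 Lb Lb else 0))"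
    by (auto simp: fun_eq_iff E_def indicator_def)
  show ?thesis unfolding eq using E_meas by measurable
qed



lemma si0:
  fixes f :: "real \<Rightarrow> real"
  assumes m: "(\<lambda>l. indicator {0..Lb} l * f l) \<in> borel_measurable borel"
    and b: "\<And>l. l \<in> {0..Lb} \<Longrightarrow> \<bar>f l\<bar> \<le> B"
  shows "set_integrable lborel {0..Lb} f"
  unfolding set_integrable_def
proof (rule integrableI_bounded_set[where A="{0..Lb}" and B=B])
  show "(\<lambda>x. indicator {0..Lb} x *\<^sub>R f x) \<in> borel_measurable lborel"
    using m by simp
  show "emeasure lborel {0..Lb} < \<infinity>"
    by (cases "0 \<le> Lb") auto
  show "AE x in lborel. x \<in> {0..Lb} \<longrightarrow> norm (indicator {0..Lb} x *\<^sub>R f x) \<le> B"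
    using b by auto
  show "AE x in lborel. x \<notin> {0..Lb} \<longrightarrow> indicator {0..Lb} x *\<^sub>R f x = 0"
    by auto
qed auto

lemma ident:
  fixes a b D :: "real \<Rightarrow> real"
  assumes am: "a \<in> borel_measurable borel" and bm: "b \<in> borel_measurable borel"
    and ab: "\<And>l. 0 \<le> a l \<and> a l \<le> 1" and bb: "\<And>l. 0 \<le> b l \<and> b l \<le> 1"
    and Dm: "(\<lambda>l. indicator {0..Lb} l * D l) \<in> borel_measurable borel"
    and Db: "\<And>l. l \<in> {0..Lb} \<Longrightarrow> 0 \<le> D l \<and> D l \<le> 1"
  shows "(LINT l:{0..Lb}|lborel. a l) = (LINT l:{0..Lb}|lborel. 1)
     - (LINT l:{0..Lb}|lborel. (1 - b l) * D l) - (LINT l:{0..Lb}|lborel. (1 - a l) * (1 - D l))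
     + (LINT l:{0..Lb}|lborel. (a l - b l) * D l)"
proof -
  let ?Di = "\<lambda>l. indicator {0..Lb} l * D l"
  have i1: "set_integrable lborel {0..Lb} a"
    by (rule si0[where B=1]) (use am ab in auto)
  have i2: "set_integrable lborel {0..Lb} (\<lambda>l. (1 - b l) * D l)"
  proof (rule si0[where B=1])
    have "(\<lambda>l. indicator {0..Lb} l * ((1 - b l) * D l)) = (\<lambda>l. (1 - b l) * ?Di l)" by auto
    then show "(\<lambda>l. indicator {0..Lb} l * ((1 - b l) * D l)) \<in> borel_measurable borel"
      using bm Dm by simp
    show "\<bar>(1 - b l) * D l\<bar> \<le> 1" if "l \<in> {0..Lb}" for l
      using bb[of l] Db[OF that] by (simp add: abs_mult mult_le_one)
  qed
  have i3: "set_integrable lborel {0..Lb} (\<lambda>l. (1 - a l) * (1 - D l))"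
  proof (rule si0[where B=1])
    have "(\<lambda>l. indicator {0..Lb} l * ((1 - a l) * (1 - D l))) = (\<lambda>l. (1 - a l) * indicator {0..Lb} l - (1 - a l) * ?Di l)"
      by (auto simp: fun_eq_iff algebra_simps)
    then show "(\<lambda>l. indicator {0..Lb} l * ((1 - a l) * (1 - D l))) \<in> borel_measurable borel"
      using am Dm by simp
    show "\<bar>(1 - a l) * (1 - D l)\<bar> \<le> 1" if "l \<in> {0..Lb}" for l
      using ab[of l] Db[OF that] by (simp add: abs_mult mult_le_one)
  qed
  have i4: "set_integrable lborel {0..Lb} (\<lambda>l. (a l - b l) * D l)"
  proof (rule si0[where B=1])
    have "(\<lambda>l. indicator {0..Lb} l * ((a l - b l) * D l)) = (\<lambda>l. (a l - b l) * ?Di l)" by auto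
    then show "(\<lambda>l. indicator {0..Lb} l * ((a l - b l) * D l)) \<in> borel_measurable borel"
      using am bm Dm by simp
    show "\<bar>(a l - b l) * D l\<bar> \<le> 1" if "l \<in> {0..Lb}" for l
      using ab[of l] bb[of l] Db[OF that] by (simp add: abs_mult abs_le_iff mult_le_one)
  qed
  have i0: "set_integrable lborel {0..Lb} (\<lambda>l. 1::real)"
    by (rule si0[where B=1]) auto
  have "(LINT l:{0..Lb}|lborel. a l) + (LINT l:{0..Lb}|lborel. (1 - b l) * D l)
      + (LINT l:{0..Lb}|lborel. (1 - a l) * (1 - D l)) - (LINT l:{0..Lb}|lborel. (a l - b l) * D l)
      = (LINT l:{0..Lb}|lborel. a l + (1 - b l) * D l + (1 - a l) * (1 - D l) - (a l - b l) * D l)"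
    using i1 i2 i3 i4 by (simp add: set_integral_add set_integral_diff)
  also have "\<dots> = (LINT l:{0..Lb}|lborel. 1)"
    by (rule set_lebesgue_integral_cong) (auto simp: algebra_simps)
  finally show ?thesis by linarith
qed



lemma Fprops:
  fixes P :: "'s measure" and L :: "'s \<Rightarrow> real" and Fa :: "real \<Rightarrow> real"
  assumes P: "prob_space P" and Lm: "L \<in> borel_measurable P"
    and Fd: "\<And>l. Fa l = measure P {s\<in>space P. L s \<le> l}"
  shows "0 \<le> Fa l" "Fa l \<le> 1" "mono Fa"
proof -
  interpret prob_space P by fact
  show "0 \<le> Fa l" unfolding Fd by simp
  show "Fa l \<le> 1" unfolding Fd by simp
  show "mono Fa"
  proof (rule monoI)
    fix x y :: real assume "x \<le> y"
    then have "{s\<in>space P. L s \<le> x} \<subseteq> {s\<in>space P. L s \<le> y}" by auto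
    moreover have "{s\<in>space P. L s \<le> y} \<in> sets P" using Lm by measurable
    ultimately show "Fa x \<le> Fa y" unfolding Fd by (rule finite_measure_mono)
  qed
qed

lemma compprops:
  fixes h f :: "real \<Rightarrow> real"
  assumes h: "distortion h" and f01: "\<And>l. 0 \<le> f l \<and> f l \<le> 1" and fm: "mono f"
  shows "(\<lambda>l. h (f l)) \<in> borel_measurable borel" "0 \<le> h (f l) \<and> h (f l) \<le> 1"
    "mono (\<lambda>l. h (f l))"
proof -
  have hm: "mono_on {0..1} h" and hr: "\<And>t. t \<in> {0..1} \<Longrightarrow> h t \<in> {0..1}"
    using h unfolding distortion_def by auto
  show mo: "mono (\<lambda>l. h (f l))"
  proof (rule monoI)
    fix x y :: real assume "x \<le> y"
    then have "f x \<le> f y" using fm by (simp add: monoD)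
    then show "h (f x) \<le> h (f y)" using hm f01[of x] f01[of y] by (auto intro: mono_onD)
  qed
  then show "(\<lambda>l. h (f l)) \<in> borel_measurable borel" by (rule borel_measurable_mono)
  show "0 \<le> h (f l) \<and> h (f l) \<le> 1" using hr[of "f l"] f01[of l] by auto
qed

lemma anti_deriv:
  fixes f :: "real \<Rightarrow> real"
  assumes d: "\<And>x. x \<in> {a..b} \<Longrightarrow> f differentiable (at x within {a..b})"
    and s: "\<And>x. x \<in> {a..b} \<Longrightarrow> dwithin f a b x \<le> 0"
    and xy: "a \<le> x" "x \<le> y" "y \<le> b"
  shows "f y \<le> f x"
proof (rule DERIV_nonpos_imp_decreasing_open[of x y f])
  show "x \<le> y" by fact
  have "continuous_on {a..b} f"
    using d differentiable_imp_continuous_within continuous_on_eq_continuous_within by blast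
  then show "continuous_on {x..y} f" by (rule continuous_on_subset) (use xy in auto)
  fix z assume z: "x < z" "z < y"
  then have zi: "z \<in> {a..b}" "a < z" "z < b" using xy by auto
  have "(f has_vector_derivative dwithin f a b z) (at z within {a..b})"
    using d[OF zi(1)] vector_derivative_works unfolding dwithin_def by auto
  then have "(f has_vector_derivative dwithin f a b z) (at z)"
    using at_within_Icc_at[OF zi(2,3)] by simp
  then have "DERIV f z :> dwithin f a b z"
    using has_real_derivative_iff_has_vector_derivative by blast
  then show "\<exists>y. DERIV f z :> y \<and> y \<le> 0" using s[OF zi(1)] by blast
qed


theorem lemma2:
  fixes P :: "'s measure" and L :: "real \<Rightarrow> 's \<Rightarrow> real"
    and F :: "real \<Rightarrow> real \<Rightarrow> real"
    and \<theta>l \<theta>u Lb \<alpha> :: real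
    and q :: "real \<Rightarrow> real" and mu eta :: "real measure"
    and g :: "real \<Rightarrow> real \<Rightarrow> real" and gIn :: "real \<Rightarrow> real"
    and Rs :: "real \<Rightarrow> real \<Rightarrow> real" and ps :: "real \<Rightarrow> real"
  assumes P: "prob_space P"
    and L_meas: "\<And>\<theta>. \<theta> \<in> {\<theta>l..\<theta>u} \<Longrightarrow> L \<theta> \<in> borel_measurable P"
    and L_range: "\<And>\<theta> s. \<theta> \<in> {\<theta>l..\<theta>u} \<Longrightarrow> s \<in> space P \<Longrightarrow> L \<theta> s \<in> {0..Lb}"
    and F_def: "\<And>\<theta> l. \<theta> \<in> {\<theta>l..\<theta>u} \<Longrightarrow> F \<theta> l = measure P {s \<in> space P. L \<theta> s \<le> l}"
    and F_cont: "\<And>\<theta>. \<theta> \<in> {\<theta>l..\<theta>u} \<Longrightarrow> continuous_on UNIV (F \<theta>)"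
    and q_meas: "q \<in> borel_measurable borel"
    and q_nonneg: "\<And>x. q x \<ge> 0"
    and mu_def: "mu = density (restrict_space lborel {\<theta>l..\<theta>u}) (\<lambda>x. ennreal (q x))"
    and mu_prob: "prob_space mu"
    and eta_prob: "prob_space eta"
    and eta_sets: "sets eta = sets mu"
    and eta_equiv: "null_sets eta = null_sets mu"
    and alpha: "0 < \<alpha>" "\<alpha> \<le> 1"
    and g_dist: "\<And>\<theta>. \<theta> \<in> {\<theta>l..\<theta>u} \<Longrightarrow> distortion (g \<theta>)"
    and gIn_dist: "distortion gIn"
    and A1: "\<And>\<theta> t. \<theta> \<in> {\<theta>l..\<theta>u} \<Longrightarrow> t \<in> {0..1} \<Longrightarrow> gIn t \<ge> g \<theta> t"
    and A2_diff: "\<And>\<theta> l. \<theta> \<in> {\<theta>l..\<theta>u} \<Longrightarrow> (\<lambda>s. F s l) differentiable (at \<theta> within {\<theta>l..\<theta>u})"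
    and A2_lip: "\<exists>K. \<forall>l. \<forall>\<theta>\<in>{\<theta>l..\<theta>u}. \<forall>\<theta>'\<in>{\<theta>l..\<theta>u}. \<bar>F \<theta> l - F \<theta>' l\<bar> \<le> K * \<bar>\<theta> - \<theta>'\<bar>"
    and A2_sign: "\<And>\<theta> l. \<theta> \<in> {\<theta>l..\<theta>u} \<Longrightarrow> dwithin (\<lambda>s. F s l) \<theta>l \<theta>u \<theta> \<le> 0"
    and A3_diff: "\<And>\<theta> t. \<theta> \<in> {\<theta>l..\<theta>u} \<Longrightarrow> t \<in> {0..1} \<Longrightarrow> g \<theta> differentiable (at t within {0..1})"
    and A3_bound: "\<exists>\<delta>. \<forall>\<theta>\<in>{\<theta>l..\<theta>u}. \<forall>t\<in>{0..1}. dwithin (g \<theta>) 0 1 t \<le> \<delta>"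
    and A3_diff_theta: "\<And>\<theta> t. \<theta> \<in> {\<theta>l..\<theta>u} \<Longrightarrow> t \<in> {0..1} \<Longrightarrow> (\<lambda>s. g s t) differentiable (at \<theta> within {\<theta>l..\<theta>u})"
    and A3_lip: "\<exists>K. \<forall>t\<in>{0..1}. \<forall>\<theta>\<in>{\<theta>l..\<theta>u}. \<forall>\<theta>'\<in>{\<theta>l..\<theta>u}. \<bar>g \<theta> t - g \<theta>' t\<bar> \<le> K * \<bar>\<theta> - \<theta>'\<bar>"
    and A3_sign: "\<And>\<theta> t. \<theta> \<in> {\<theta>l..\<theta>u} \<Longrightarrow> t \<in> {0<..<1} \<Longrightarrow> dwithin (\<lambda>s. g s t) \<theta>l \<theta>u \<theta> \<le> 0"
    and eff: "incentive_efficient mu Lb g gIn F Rs ps"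
    and opt: "optimal_W \<alpha> eta mu Lb g gIn F Rs ps"
    and premium: "\<And>\<theta>. \<theta> \<in> {\<theta>l..\<theta>u} \<Longrightarrow> ps \<theta> =
        (LINT l:{0..Lb}|lborel. 1 - g \<theta>l (F \<theta>l l))
      - (LINT s:{\<theta>l..\<theta>}|lborel. (LINT l:{0..Lb}|lborel.
            (dwithin (\<lambda>r. g r (F s l)) \<theta>l \<theta>u s + dwithin (g s) 0 1 (F s l) * dwithin (\<lambda>r. F r l) \<theta>l \<theta>u s)
            * dwithin (Rs s) 0 Lb l))
      - (LINT l:{0..Lb}|lborel. (1 - g \<theta> (F \<theta> l)) * dwithin (Rs \<theta>) 0 Lb l)"
  shows
    "((\<forall>\<theta>\<in>{\<theta>l..\<theta>u}. \<forall>l\<in>{0..Lb}. dwithin (Rs \<theta>) 0 Lb l = 0) \<longrightarrow>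
        (\<integral>\<theta>. (LINT l:{0..Lb}|lborel. gIn (F \<theta> l)) \<partial>mu) \<ge> (LINT l:{0..Lb}|lborel. g \<theta>l (F \<theta>l l)))
   \<and> ((\<forall>\<theta>\<in>{\<theta>l..\<theta>u}. \<forall>l\<in>{0..Lb}. dwithin (Rs \<theta>) 0 Lb l = 1) \<longrightarrow>
        (\<forall>\<theta>\<in>{\<theta>l..\<theta>u}. Vt Lb gIn (F \<theta>) (Rs \<theta>) (ps \<theta>) = 0))
   \<and> ((\<forall>\<theta>\<in>{\<theta>l..\<theta>u}. \<forall>l\<in>{0..Lb}. dwithin (Rs \<theta>) 0 Lb l \<in> {0<..<1}) \<longrightarrow>
        (\<integral>\<theta>. (LINT l:{0..Lb}|lborel. gIn (F \<theta> l)) \<partial>mu) \<ge>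
          (LINT l:{0..Lb}|lborel. g \<theta>l (F \<theta>l l))
          + (\<integral>\<theta>. Ut Lb (g \<theta>) (F \<theta>) (Rs \<theta>) (ps \<theta>) \<partial>mu)
          - Ut Lb (g \<theta>l) (F \<theta>l) (Rs \<theta>l) (ps \<theta>l)
          + (\<integral>\<theta>. (LINT l:{0..Lb}|lborel. (gIn (F \<theta> l) - g \<theta> (F \<theta> l)) * dwithin (Rs \<theta>) 0 Lb l) \<partial>mu))
   \<and> ((\<forall>\<theta>\<in>{\<theta>l..\<theta>u}. ps \<theta> = 0 \<and> (\<forall>l\<in>{0..Lb}. Rs \<theta> l = 0)) \<longrightarrow>
        (AE \<theta> in mu. AE l in lebesgue_on {0..Lb}. gIn (F \<theta> l) = 1))"
proof -
  let ?I = "{\<theta>l..\<theta>u}"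
  have spmu: "space mu = ?I" by (simp add: mu_def)
  have setsmu: "sets mu = sets (restrict_space lborel ?I)" by (simp add: mu_def)
  interpret M: prob_space mu by (rule mu_prob)
  have pI: "M.prob ?I = 1" using M.prob_space spmu by simp
  have Ine: "\<theta>l \<le> \<theta>u" using M.not_empty spmu by auto
  have feas: "feasible mu Lb g gIn F Rs ps" using eff by (simp add: incentive_efficient_def)
  then have ret: "\<And>\<theta>. \<theta>\<in>?I \<Longrightarrow> retention Lb (Rs \<theta>)"
    and Uint: "integrable mu (\<lambda>\<theta>. Ut Lb (g \<theta>) (F \<theta>) (Rs \<theta>) (ps \<theta>))"
    and Vint: "integrable mu (\<lambda>\<theta>. Vt Lb gIn (F \<theta>) (Rs \<theta>) (ps \<theta>))"
    and IRU: "\<And>\<theta>. \<theta>\<in>?I \<Longrightarrow> Ut Lb (g \<theta>) (F \<theta>) (Rs \<theta>) (ps \<theta>) \<ge> U0 Lb (g \<theta>) (F \<theta>)"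
    and IRV: "(\<integral>\<theta>. Vt Lb gIn (F \<theta>) (Rs \<theta>) (ps \<theta>) \<partial>mu) \<ge> 0"
    and ICc: "\<And>\<theta> \<theta>'. \<theta>\<in>?I \<Longrightarrow> \<theta>'\<in>?I \<Longrightarrow>
        Ut Lb (g \<theta>) (F \<theta>) (Rs \<theta>) (ps \<theta>) \<ge> Ut Lb (g \<theta>) (F \<theta>) (Rs \<theta>') (ps \<theta>')"
    unfolding feasible_def menu_def IR_def IC_def spmu by auto
  have F01: "\<And>l. 0 \<le> F \<theta> l \<and> F \<theta> l \<le> 1" and Fmono: "mono (F \<theta>)" if "\<theta> \<in> ?I" for \<theta>
    using Fprops[OF P L_meas[OF that] F_def[OF that]] by auto
  have gInm: "(\<lambda>l. gIn (F \<theta> l)) \<in> borel_measurable borel"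
    and gIn01: "\<And>l. 0 \<le> gIn (F \<theta> l) \<and> gIn (F \<theta> l) \<le> 1" if "\<theta> \<in> ?I" for \<theta>
    using compprops[OF gIn_dist F01[OF that] Fmono[OF that]] by auto
  have gm: "(\<lambda>l. g \<theta> (F \<theta> l)) \<in> borel_measurable borel"
    and g01: "\<And>l. 0 \<le> g \<theta> (F \<theta> l) \<and> g \<theta> (F \<theta> l) \<le> 1" if "\<theta> \<in> ?I" for \<theta>
    using compprops[OF g_dist[OF that] F01[OF that] Fmono[OF that]] by auto
  have Dm: "(\<lambda>l. indicator {0..Lb} l * dwithin (Rs \<theta>) 0 Lb l) \<in> borel_measurable borel"
    if "\<theta> \<in> ?I" for \<theta>
    by (rule deriv_meas) (use ret[OF that] in \<open>auto simp: retention_def\<close>)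
  have Db: "\<And>l. l \<in> {0..Lb} \<Longrightarrow> 0 \<le> dwithin (Rs \<theta>) 0 Lb l \<and> dwithin (Rs \<theta>) 0 Lb l \<le> 1"
    if "\<theta> \<in> ?I" for \<theta>
    using ret[OF that] by (auto simp: retention_def)
  define G where "G \<theta> = (LINT l:{0..Lb}|lborel. gIn (F \<theta> l))" for \<theta>
  define W where "W \<theta> = (LINT l:{0..Lb}|lborel. (gIn (F \<theta> l) - g \<theta> (F \<theta> l)) * dwithin (Rs \<theta>) 0 Lb l)" for \<theta>
  define C0 where "C0 = (LINT l:{0..Lb}|lborel. (1::real))"
  define U where "U \<theta> = Ut Lb (g \<theta>) (F \<theta>) (Rs \<theta>) (ps \<theta>)" for \<theta>
  define V where "V \<theta> = Vt Lb gIn (F \<theta>) (Rs \<theta>) (ps \<theta>)" for \<theta>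
  have key: "G \<theta> = C0 + U \<theta> + V \<theta> + W \<theta>" if "\<theta> \<in> ?I" for \<theta>
    using ident[OF gInm[OF that] gm[OF that] gIn01[OF that] g01[OF that] Dm[OF that] Db[OF that]]
    unfolding G_def W_def C0_def U_def V_def Ut_def Vt_def by linarith
  have gIn_si: "set_integrable lborel {0..Lb} (\<lambda>l. gIn (F \<theta> l))" if "\<theta> \<in> ?I" for \<theta>
    by (rule si0[where B=1]) (use gInm[OF that] gIn01[OF that] in auto)
  have g_si: "set_integrable lborel {0..Lb} (\<lambda>l. g \<theta> (F \<theta> l))" if "\<theta> \<in> ?I" for \<theta>
    by (rule si0[where B=1]) (use gm[OF that] g01[OF that] in auto)
  have one_si: "set_integrable lborel {0..Lb} (\<lambda>l. 1::real)"
    by (rule si0[where B=1]) auto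
  have zero_si: "set_integrable lborel {0..Lb} (\<lambda>l. 0::real)"
    by (rule si0[where B=1]) auto
  have Gb: "0 \<le> G \<theta> \<and> G \<theta> \<le> C0" if "\<theta> \<in> ?I" for \<theta>
  proof
    have "(LINT l:{0..Lb}|lborel. (0::real)) \<le> G \<theta>" unfolding G_def
      by (rule set_integral_mono[OF zero_si gIn_si[OF that]]) (use gIn01[OF that] in auto)
    then show "0 \<le> G \<theta>" by simp
    show "G \<theta> \<le> C0" unfolding G_def C0_def
      by (rule set_integral_mono[OF gIn_si[OF that] one_si]) (use gIn01[OF that] in auto)
  qed
  have Ganti: "G \<theta>' \<le> G \<theta>" if "\<theta> \<in> ?I" "\<theta>' \<in> ?I" "\<theta> \<le> \<theta>'" for \<theta> \<theta>'
  proof -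
    have "F \<theta>' l \<le> F \<theta> l" for l
      by (rule anti_deriv[of \<theta>l \<theta>u "\<lambda>s. F s l"]) (use A2_diff A2_sign that in auto)
    then have "gIn (F \<theta>' l) \<le> gIn (F \<theta> l)" for l
      using gIn_dist F01[OF that(1)] F01[OF that(2)] unfolding distortion_def
      by (auto intro: mono_onD)
    then show ?thesis unfolding G_def
      by (intro set_integral_mono gIn_si that)
  qed
  have "(\<lambda>\<theta>. - G \<theta>) \<in> borel_measurable (restrict_space borel ?I)"
    by (rule borel_measurable_mono_on_fnc) (auto intro!: mono_onI simp: Ganti)
  then have Gm: "(\<lambda>\<theta>. - (- G \<theta>)) \<in> borel_measurable (restrict_space borel ?I)" by measurable
  have eqm: "borel_measurable mu = borel_measurable (restrict_space borel ?I)"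
    by (rule measurable_cong_sets) (auto simp: setsmu sets_restrict_space)
  have Gmeas: "G \<in> borel_measurable mu" unfolding eqm using Gm by simp
  have Gint: "integrable mu G"
    by (rule M.integrable_const_bound[where B=C0]) (use Gb Gmeas in \<open>auto simp: spmu\<close>)
  have Uint': "integrable mu U" using Uint unfolding U_def .
  have Vint': "integrable mu V" using Vint unfolding V_def .
  have Wint: "integrable mu W"
  proof -
    have "integrable mu (\<lambda>\<theta>. G \<theta> - C0 - U \<theta> - V \<theta>)" using Gint Uint' Vint' by auto
    then show ?thesis
      by (rule Bochner_Integration.integrable_cong[THEN iffD1, rotated -1]) (auto simp: spmu key)
  qed
  have intG: "(\<integral>\<theta>. G \<theta> \<partial>mu) = C0 + (\<integral>\<theta>. U \<theta> \<partial>mu) + (\<integral>\<theta>. V \<theta> \<partial>mu) + (\<integral>\<theta>. W \<theta> \<partial>mu)"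
  proof -
    have "(\<integral>\<theta>. G \<theta> \<partial>mu) = (\<integral>\<theta>. C0 + U \<theta> + V \<theta> + W \<theta> \<partial>mu)"
      by (rule Bochner_Integration.integral_cong) (auto simp: spmu key)
    also have "\<dots> = C0 + (\<integral>\<theta>. U \<theta> \<partial>mu) + (\<integral>\<theta>. V \<theta> \<partial>mu) + (\<integral>\<theta>. W \<theta> \<partial>mu)"
      using Uint' Vint' Wint by (simp add: M.prob_space)
    finally show ?thesis .
  qed
  define Gl where "Gl = (LINT l:{0..Lb}|lborel. g \<theta>l (F \<theta>l l))"
  define C where "C = (LINT l:{0..Lb}|lborel. 1 - g \<theta>l (F \<theta>l l))"
  have lI: "\<theta>l \<in> ?I" using Ine by auto
  have CGl: "C = C0 - Gl" unfolding C_def C0_def Gl_def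
    using set_integral_diff(2)[OF one_si g_si[OF lI]] by simp
  show ?thesis
  proof (intro conjI impI)
    show "(\<integral>\<theta>. (LINT l:{0..Lb}|lborel. gIn (F \<theta> l)) \<partial>mu) \<ge> (LINT l:{0..Lb}|lborel. g \<theta>l (F \<theta>l l))"
      if D0: "\<forall>\<theta>\<in>?I. \<forall>l\<in>{0..Lb}. dwithin (Rs \<theta>) 0 Lb l = 0"
    proof -
      have z: "(LINT l:{0..Lb}|lborel. X l * dwithin (Rs \<theta>) 0 Lb l) = 0" if "\<theta> \<in> ?I" for X \<theta>
      proof -
        have "(LINT l:{0..Lb}|lborel. X l * dwithin (Rs \<theta>) 0 Lb l) = (LINT l:{0..Lb}|lborel. 0)"
          by (rule set_lebesgue_integral_cong) (use D0 that in auto)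
        then show ?thesis by simp
      qed
      have psC: "ps \<theta> = C" if "\<theta> \<in> ?I" for \<theta>
      proof -
        have "(LINT s:{\<theta>l..\<theta>}|lborel. (LINT l:{0..Lb}|lborel.
            (dwithin (\<lambda>r. g r (F s l)) \<theta>l \<theta>u s + dwithin (g s) 0 1 (F s l) * dwithin (\<lambda>r. F r l) \<theta>l \<theta>u s)
            * dwithin (Rs s) 0 Lb l)) = (LINT s:{\<theta>l..\<theta>}|lborel. 0)"
          by (rule set_lebesgue_integral_cong) (use that in \<open>auto intro!: z\<close>)
        then show ?thesis using premium[OF that] z[OF that] unfolding C_def by simp
      qed
      have "U \<theta> = - C" if "\<theta> \<in> ?I" for \<theta>
        unfolding U_def Ut_def using psC[OF that] z[OF that] by simp
      then have iU: "(\<integral>\<theta>. U \<theta> \<partial>mu) = - C"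
        using Bochner_Integration.integral_cong[of mu mu U "\<lambda>_. - C"] by (simp add: spmu pI)
      have "W \<theta> = 0" if "\<theta> \<in> ?I" for \<theta>
        unfolding W_def using z[OF that] .
      then have iW: "(\<integral>\<theta>. W \<theta> \<partial>mu) = 0"
        using Bochner_Integration.integral_cong[of mu mu W "\<lambda>_. 0"] by (simp add: spmu)
      show ?thesis using intG iU iW IRV CGl unfolding G_def V_def Gl_def by linarith
    qed
  next
    show "\<forall>\<theta>\<in>?I. Vt Lb gIn (F \<theta>) (Rs \<theta>) (ps \<theta>) = 0"
      if D1: "\<forall>\<theta>\<in>?I. \<forall>l\<in>{0..Lb}. dwithin (Rs \<theta>) 0 Lb l = 1"
    proof -
      have z: "(LINT l:{0..Lb}|lborel. X l * dwithin (Rs \<theta>) 0 Lb l) = (LINT l:{0..Lb}|lborel. X l)"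
        if "\<theta> \<in> ?I" for X \<theta>
        by (rule set_lebesgue_integral_cong) (use D1 that in auto)
      have z2: "(LINT l:{0..Lb}|lborel. X l * (1 - dwithin (Rs \<theta>) 0 Lb l)) = 0"
        if "\<theta> \<in> ?I" for X \<theta>
      proof -
        have "(LINT l:{0..Lb}|lborel. X l * (1 - dwithin (Rs \<theta>) 0 Lb l)) = (LINT l:{0..Lb}|lborel. 0)"
          by (rule set_lebesgue_integral_cong) (use D1 that in auto)
        then show ?thesis by simp
      qed
      have Vp: "V \<theta> = ps \<theta>" if "\<theta> \<in> ?I" for \<theta>
        unfolding V_def Vt_def using z2[OF that] by simp
      have pseq: "ps \<theta> \<le> ps \<theta>'" if "\<theta> \<in> ?I" "\<theta>' \<in> ?I" for \<theta> \<theta>'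
        using ICc[OF that] z[OF that(1)] z[OF that(2)] unfolding Ut_def by simp
      have psn: "ps \<theta> \<le> 0" if "\<theta> \<in> ?I" for \<theta>
        using IRU[OF that] z[OF that(1)] unfolding Ut_def U0_def by simp
      have "ps \<theta>l \<ge> 0"
      proof -
        have "V \<theta> = ps \<theta>l" if "\<theta> \<in> ?I" for \<theta>
          using Vp[OF that] pseq[OF that lI] pseq[OF lI that] by simp
        then have "(\<integral>\<theta>. V \<theta> \<partial>mu) = ps \<theta>l"
          using Bochner_Integration.integral_cong[of mu mu V "\<lambda>_. ps \<theta>l"] by (simp add: spmu pI)
        then show ?thesis using IRV unfolding V_def by simp
      qed
      then show ?thesis
        using Vp psn pseq lI unfolding V_def by (metis antisym)
    qed
  next
    show "(\<integral>\<theta>. (LINT l:{0..Lb}|lborel. gIn (F \<theta> l)) \<partial>mu) \<ge>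
          (LINT l:{0..Lb}|lborel. g \<theta>l (F \<theta>l l))
          + (\<integral>\<theta>. Ut Lb (g \<theta>) (F \<theta>) (Rs \<theta>) (ps \<theta>) \<partial>mu)
          - Ut Lb (g \<theta>l) (F \<theta>l) (Rs \<theta>l) (ps \<theta>l)
          + (\<integral>\<theta>. (LINT l:{0..Lb}|lborel. (gIn (F \<theta> l) - g \<theta> (F \<theta> l)) * dwithin (Rs \<theta>) 0 Lb l) \<partial>mu)"
    proof -
      have s0: "(LINT s:{\<theta>l..\<theta>l}|lborel. X s) = 0" for X :: "real \<Rightarrow> real"
      proof -
        have "(LINT s:{\<theta>l..\<theta>l}|lborel. X s) = integral\<^sup>L lborel (\<lambda>s. indicator {\<theta>l..\<theta>l} s *\<^sub>R X s)"
          by (simp add: set_lebesgue_integral_def)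
        also have "\<dots> = 0"
          by (rule integral_eq_zero_AE) (use AE_lborel_singleton[of \<theta>l] in \<open>auto elim!: eventually_mono\<close>)
        finally show ?thesis .
      qed
      have "U \<theta>l = - C" unfolding U_def Ut_def C_def using premium[OF lI] s0 by simp
      then show ?thesis using intG IRV CGl unfolding G_def V_def Gl_def U_def W_def by linarith
    qed
  next
    show "AE \<theta> in mu. AE l in lebesgue_on {0..Lb}. gIn (F \<theta> l) = 1"
      if Z: "\<forall>\<theta>\<in>?I. ps \<theta> = 0 \<and> (\<forall>l\<in>{0..Lb}. Rs \<theta> l = 0)"
    proof (cases "0 < Lb")
      case False
      have nsb: "{0..Lb} \<in> null_sets lborel"
        by (rule null_sets_subset[of "{0::real}"]) (use False in auto)
      have nsl: "{0..Lb} \<in> null_sets lebesgue"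
        using nsb by (rule null_sets_completionI)
      have sl: "{0..Lb} \<inter> space lebesgue \<in> sets lebesgue"
        by simp
      have "AE l in lebesgue_on {0..Lb}. gIn (F \<theta> l) = 1" for \<theta>
      proof -
        have "AE l in lebesgue. l \<in> {0..Lb} \<longrightarrow> gIn (F \<theta> l) = 1"
          by (rule AE_I'[OF nsl]) blast
        then show ?thesis using AE_restrict_space_iff[OF sl] by blast
      qed
      then show ?thesis by simp
    next
      case True
      have D0: "dwithin (Rs \<theta>) 0 Lb l = 0" if "\<theta> \<in> ?I" "l \<in> {0..Lb}" for \<theta> l
      proof -
        have "((\<lambda>x. 0::real) has_vector_derivative 0) (at l within {0..Lb})" by simp
        then have "(Rs \<theta> has_vector_derivative 0) (at l within {0..Lb})"
          by (rule has_vector_derivative_transform[rotated 2]) (use Z that in auto)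
        then show ?thesis unfolding dwithin_def
          using vector_derivative_within_closed_interval[OF True that(2)] by blast
      qed
      define h where "h \<theta> = (LINT l:{0..Lb}|lborel. 1 - gIn (F \<theta> l))" for \<theta>
      have Vh: "V \<theta> = - h \<theta>" if "\<theta> \<in> ?I" for \<theta>
      proof -
        have "(LINT l:{0..Lb}|lborel. (1 - gIn (F \<theta> l)) * (1 - dwithin (Rs \<theta>) 0 Lb l)) = h \<theta>"
          unfolding h_def by (rule set_lebesgue_integral_cong) (use D0 that in auto)
        then show ?thesis unfolding V_def Vt_def using Z that by simp
      qed
      have h_si: "set_integrable lborel {0..Lb} (\<lambda>l. 1 - gIn (F \<theta> l))" if "\<theta> \<in> ?I" for \<theta>
        using set_integral_diff(1)[OF one_si gIn_si[OF that]] .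
      have hnn: "0 \<le> h \<theta>" if "\<theta> \<in> ?I" for \<theta>
      proof -
        have "(LINT l:{0..Lb}|lborel. (0::real)) \<le> h \<theta>" unfolding h_def
          by (rule set_integral_mono[OF zero_si h_si[OF that]]) (use gIn01[OF that] in auto)
        then show ?thesis by simp
      qed
      have "integrable mu (\<lambda>\<theta>. - V \<theta>) = integrable mu h"
        by (rule Bochner_Integration.integrable_cong) (auto simp: spmu Vh)
      then have hint: "integrable mu h" using Vint' by simp
      have ih: "(\<integral>\<theta>. h \<theta> \<partial>mu) = - (\<integral>\<theta>. V \<theta> \<partial>mu)"
      proof -
        have "(\<integral>\<theta>. V \<theta> \<partial>mu) = (\<integral>\<theta>. - h \<theta> \<partial>mu)"
          by (rule Bochner_Integration.integral_cong) (auto simp: spmu Vh)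
        then show ?thesis by simp
      qed
      have "(\<integral>\<theta>. h \<theta> \<partial>mu) \<ge> 0"
        by (rule integral_nonneg_AE) (auto simp: spmu hnn)
      then have "(\<integral>\<theta>. h \<theta> \<partial>mu) = 0" using ih IRV unfolding V_def by linarith
      moreover have "AE \<theta> in mu. 0 \<le> h \<theta>"
        by (rule AE_I2) (simp add: spmu hnn)
      ultimately have AEh: "AE \<theta> in mu. h \<theta> = 0"
        using integral_nonneg_eq_0_iff_AE[OF hint] by simp
      show ?thesis
        using AEh AE_space
      proof (rule AE_mp[OF AE_conjI])
        show "AE \<theta> in mu. h \<theta> = 0 \<and> \<theta> \<in> space mu \<longrightarrow> (AE l in lebesgue_on {0..Lb}. gIn (F \<theta> l) = 1)"
        proof (rule AE_I2, intro impI, elim conjE)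
          fix \<theta> assume h0: "h \<theta> = 0" and ts: "\<theta> \<in> space mu"
          then have tI: "\<theta> \<in> ?I" by (simp add: spmu)
          have ii: "integrable lborel (\<lambda>l. indicator {0..Lb} l *\<^sub>R (1 - gIn (F \<theta> l)))"
            using h_si[OF tI] unfolding set_integrable_def .
          have "integral\<^sup>L lborel (\<lambda>l. indicator {0..Lb} l *\<^sub>R (1 - gIn (F \<theta> l))) = 0"
            using h0 unfolding h_def set_lebesgue_integral_def .
          moreover have "AE l in lborel. 0 \<le> indicator {0..Lb} l *\<^sub>R (1 - gIn (F \<theta> l))"
            by (rule AE_I2) (simp add: indicator_def gIn01[OF tI])
          ultimately have "AE l in lborel. indicator {0..Lb} l *\<^sub>R (1 - gIn (F \<theta> l)) = 0"
            using integral_nonneg_eq_0_iff_AE[OF ii] by simp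
          then have "AE l in lborel. l \<in> {0..Lb} \<longrightarrow> gIn (F \<theta> l) = 1"
          proof (rule eventually_mono)
            fix l assume "indicator {0..Lb} l *\<^sub>R (1 - gIn (F \<theta> l)) = (0::real)"
            then show "l \<in> {0..Lb} \<longrightarrow> gIn (F \<theta> l) = 1"
              by (cases "l \<in> {0..Lb}") auto
          qed
          then have "AE l in lebesgue. l \<in> {0..Lb} \<longrightarrow> gIn (F \<theta> l) = 1"
            by (rule AE_completion)
          then show "AE l in lebesgue_on {0..Lb}. gIn (F \<theta> l) = 1"
            by (subst AE_restrict_space_iff) auto
        qed
      qed
    qed
  qed
qed

end
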